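(* Let $m\ge 2$. If $s=2m-1$ then $|T_s|=m^2-m$ and $\sum_{h\in T_s}h=\frac23m^4-m^3-\frac16m^2+\frac12m$; if $s=2m$ then $|T_s|=m^2$ and $\sum_{h\in T_s}h=\frac23m^4+\frac13m^3-\frac16m^2+\frac16m$. Moreover, for $s=2m-1$ the partition $\kappa_s$ with $\beta(\kappa_s)=T_s$ has length $m^2-m$ and largest part $m^2-2m+1$.
   Context: $T_s$ is the set of positive integers not expressible as $k_1s+k_2(s+1)+k_3(s+2)$ with $k_1,k_2,k_3$ nonnegative integers. The $\beta$-set of a partition is the set of hook lengths of its first-column boxes; the partition with $\beta$-set $\{h_1>\cdots>h_m\}$ is $(h_1-(m-1),h_2-(m-2),\ldots,h_m)$. *)

theory Defs
  imports Complex_Main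
begin

definition T :: "nat \<Rightarrow> nat set" where
  "T s = {h::nat. 0 < h \<and> \<not> (\<exists>k1 k2 k3. h = k1 * s + k2 * (s + 1) + k3 * (s + 2))}"

text \<open>The partition (as a weakly decreasing list of parts, zero parts removed) whose
  beta-set is the finite set B = {h_1 > ... > h_n}: parts h_i - (n - i).\<close>
definition beta_partition :: "nat set \<Rightarrow> nat list" where
  "beta_partition B =
     (let hs = rev (sorted_list_of_set B); n = length hs
      in filter (\<lambda>x. 0 < x) (map (\<lambda>i. hs ! i - (n - 1 - i)) [0..<n]))"

end

theory Submission imports Defs begin

lemma repr_iff:
  assumes s: "s \<ge> (1::nat)"
  shows "(\<exists>k1 k2 k3. h = k1 * s + k2 * (s + 1) + k3 * (s + 2)) \<longleftrightarrow> h mod s \<le> 2 * (h div s)"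
proof
  assume "\<exists>k1 k2 k3. h = k1 * s + k2 * (s + 1) + k3 * (s + 2)"
  then obtain k1 k2 k3 where h: "h = k1 * s + k2 * (s + 1) + k3 * (s + 2)" by blast
  define k where "k = k1 + k2 + k3"
  have h2: "h = k * s + (k2 + 2*k3)" unfolding k_def h by (simp add: algebra_simps)
  have "k * s div s \<le> h div s" using h2 by (intro div_le_mono) simp
  then have kq: "k \<le> h div s" using s by simp
  have "h div s * s + h mod s = h" by simp
  moreover have "k * s \<le> h div s * s" using kq by simp
  ultimately have "h mod s \<le> k2 + 2*k3" using h2 by linarith
  then show "h mod s \<le> 2 * (h div s)" using kq unfolding k_def by linarith
next
  assume r: "h mod s \<le> 2 * (h div s)"
  define q where "q = h div s"
  define r where "r = h mod s"
  have hq: "h = q * s + r" unfolding q_def r_def by simp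
  have rq: "r \<le> 2*q" using r unfolding q_def r_def by simp
  have le: "r div 2 + r mod 2 \<le> q" using rq by presburger
  have "h = (q - (r mod 2) - (r div 2)) * s + (r mod 2) * (s + 1) + (r div 2) * (s + 2)"
  proof -
    have g: "(c::nat) * s + a * (s + 1) + b * (s + 2) = (c + a + b) * s + (a + 2 * b)" for a b c
      by (simp add: algebra_simps)
    have "(q - (r mod 2) - (r div 2)) * s + (r mod 2) * (s + 1) + (r div 2) * (s + 2)
        = ((q - (r mod 2) - (r div 2)) + r mod 2 + r div 2) * s + (r mod 2 + 2 * (r div 2))"
      by (rule g)
    also have "\<dots> = q * s + r"
    proof -
      have e: "(q - r mod 2 - r div 2) + r mod 2 + r div 2 = q" using le by simp
      have e2: "r mod 2 + 2*(r div 2) = r" by presburger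
      show ?thesis by (simp only: e e2)
    qed
    finally show ?thesis using hq by simp
  qed
  then show "\<exists>k1 k2 k3. h = k1 * s + k2 * (s + 1) + k3 * (s + 2)" by blast
qed

lemma T_mem: "s \<ge> 1 \<Longrightarrow> h \<in> T s \<longleftrightarrow> 0 < h \<and> 2 * (h div s) < h mod s"
  unfolding T_def using repr_iff[of s h] by auto

lemma T_union:
  assumes s: "s \<ge> (1::nat)"
  shows "T s = (\<Union>q<s div 2. {q*s+2*q+1..<q*s+s})"
proof (rule set_eqI)
  fix x
  show "x \<in> T s \<longleftrightarrow> x \<in> (\<Union>q<s div 2. {q*s+2*q+1..<q*s+s})"
  proof
    assume "x \<in> T s"
    then have a: "0 < x" "2 * (x div s) < x mod s" using T_mem[OF s] by auto
    have "x mod s < s" using s by simp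
    then have "x div s < s div 2" using a by linarith
    moreover have eq: "x div s * s + x mod s = x" by simp
    moreover have "x div s * s + 2 * (x div s) + 1 \<le> x" "x < x div s * s + s"
      using a eq \<open>x mod s < s\<close> by linarith+
    ultimately show "x \<in> (\<Union>q<s div 2. {q*s+2*q+1..<q*s+s})"
      using a \<open>x mod s < s\<close> by (intro UN_I[of "x div s"]) auto
  next
    assume "x \<in> (\<Union>q<s div 2. {q*s+2*q+1..<q*s+s})"
    then obtain q where q: "q < s div 2" "q*s+2*q+1 \<le> x" "x < q*s+s" by auto
    define r where "r = x - q*s"
    have x: "x = q * s + r" "r < s" using q unfolding r_def by auto
    have "x div s = q" "x mod s = r" using x s by auto
    then show "x \<in> T s" using T_mem[OF s] q x by auto
  qed
qed


lemma int_div: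
  assumes "x \<in> {q*s+2*q+1..<q*s+(s::nat)}"
  shows "x div s = q"
  using assms by (intro div_nat_eqI) (auto simp: algebra_simps)

lemma disj_T:
  "q \<noteq> q' \<Longrightarrow> {q*s+2*q+1..<q*s+(s::nat)} \<inter> {q'*s+2*q'+1..<q'*s+s} = {}"
  using int_div[of _ q s] int_div[of _ q' s] by blast

lemma card_T:
  assumes s: "s \<ge> (1::nat)"
  shows "real (card (T s)) = (\<Sum>q<s div 2. real s - 2 * real q - 1)"
proof -
  have "card (T s) = (\<Sum>q<s div 2. card {q*s+2*q+1..<q*s+s})"
    unfolding T_union[OF s]
    by (rule card_UN_disjoint) (use disj_T in auto)
  also have "\<dots> = (\<Sum>q<s div 2. s - 2 * q - 1)"
    by (rule sum.cong) auto
  finally have "real (card (T s)) = (\<Sum>q<s div 2. real (s - 2 * q - 1))" by simp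
  also have "\<dots> = (\<Sum>q<s div 2. real s - 2 * real q - 1)"
  proof (rule sum.cong)
    fix q assume "q \<in> {..<s div 2}"
    then have "2 * q + 1 \<le> s" by auto
    then show "real (s - 2 * q - 1) = real s - 2 * real q - 1" by (simp add: of_nat_diff)
  qed simp
  finally show ?thesis .
qed

lemma sum_ival: "(\<Sum>i\<in>{a..<a+k}. real i) = real k * (2 * real a + real k - 1) / 2"
proof (induction k)
  case 0 then show ?case by simp
next
  case (Suc k)
  have "(\<Sum>i\<in>{a..<a+Suc k}. real i) = (\<Sum>i\<in>{a..<a+k}. real i) + real (a + k)"
    by (simp add: sum.atLeastLessThan_Suc)
  then show ?case using Suc by (simp add: field_simps)
qed

lemma sum_T:
  assumes s: "s \<ge> (1::nat)"
  shows "real (\<Sum>h\<in>T s. h) =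
    (\<Sum>q<s div 2. (real s - 2 * real q - 1) * (2 * real q * real s + 2 * real q + real s) / 2)"
proof -
  have "(\<Sum>h\<in>T s. real h) = (\<Sum>q<s div 2. \<Sum>h\<in>{q*s+2*q+1..<q*s+s}. real h)"
    unfolding T_union[OF s]
    by (rule sum.UNION_disjoint) (use disj_T in auto)
  also have "\<dots> = (\<Sum>q<s div 2. (real s - 2 * real q - 1) * (2 * real q * real s + 2 * real q + real s) / 2)"
  proof (rule sum.cong)
    fix q assume "q \<in> {..<s div 2}"
    then have le: "2 * q + 1 \<le> s" by auto
    have eq: "{q*s+2*q+1..<q*s+s} = {q*s+2*q+1..<(q*s+2*q+1) + (s - 2*q - 1)}" using le by auto
    have "(\<Sum>h\<in>{q*s+2*q+1..<q*s+s}. real h) = real (s - 2*q - 1) * (2 * real (q*s+2*q+1) + real (s - 2*q - 1) - 1) / 2"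
      by (simp only: eq sum_ival)
    also have "\<dots> = (real s - 2 * real q - 1) * (2 * real q * real s + 2 * real q + real s) / 2"
      using le by (simp add: of_nat_diff algebra_simps)
    finally show "(\<Sum>h\<in>{q*s+2*q+1..<q*s+s}. real h) = (real s - 2 * real q - 1) * (2 * real q * real s + 2 * real q + real s) / 2" .
  qed simp
  finally show ?thesis by simp
qed

lemma poly_sum: "(\<Sum>q<N. A + B * real q + C * (real q)^2) =
   A * real N + B * real N * (real N - 1) / 2 + C * (real N - 1) * real N * (2 * real N - 1) / 6"
  by (induction N) (simp_all add: field_simps power2_eq_square)


lemma beta_part:
  assumes fin: "finite B" and z: "0 \<notin> B" and ne: "B \<noteq> {}"
  shows "length (beta_partition B) = card B \<and> Max (set (beta_partition B)) = Max B - (card B - 1)"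
proof -
  define L where "L = sorted_list_of_set B"
  define n where "n = length L"
  have n: "n = card B" unfolding n_def L_def by simp
  have sw: "sorted_wrt (<) L" unfolding L_def by (rule strict_sorted_list_of_set)
  have setL: "set L = B" unfolding L_def using fin by simp
  have npos: "n > 0" using n fin ne by (simp add: card_gt_0_iff)
  have grow: "j + k < n \<Longrightarrow> L!j + k \<le> L!(j+k)" for j k
  proof (induction k)
    case 0 then show ?case by simp
  next
    case (Suc k)
    have "L!(j+k) < L!(j+Suc k)" using sw Suc.prems unfolding n_def
      by (intro sorted_wrt_nth_less) auto
    then show ?case using Suc by simp
  qed
  have L0: "L!0 \<ge> 1"
  proof -
    have "L!0 \<in> B" using npos setL unfolding n_def by (metis nth_mem)
    then show ?thesis using z by (cases "L!0") auto
  qed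
  have Lj: "j < n \<Longrightarrow> L!j \<ge> j + 1" for j
    using grow[of 0 j] L0 by simp
  define f where "f i = rev L ! i - (n - 1 - i)" for i
  have fi: "i < n \<Longrightarrow> f i = L!(n-1-i) - (n-1-i)" for i
    unfolding f_def n_def by (simp add: rev_nth)
  have bp: "beta_partition B = filter (\<lambda>x. 0 < x) (map f [0..<n])"
    unfolding beta_partition_def f_def n_def L_def by (simp add: Let_def)
  have fpos: "i < n \<Longrightarrow> 0 < f i" for i
    using fi[of i] Lj[of "n-1-i"] by simp
  have bp2: "beta_partition B = map f [0..<n]"
    unfolding bp by (rule filter_True) (auto simp: fpos)
  have MaxB: "Max B = L!(n-1)"
  proof (rule Max_eqI[OF fin])
    fix y assume "y \<in> B"
    then obtain j where j: "j < n" "y = L!j" using setL unfolding n_def by (metis in_set_conv_nth)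
    then show "y \<le> L!(n-1)" using grow[of j "n-1-j"] by simp
  next
    show "L!(n-1) \<in> B" using setL npos unfolding n_def by (metis diff_less nth_mem zero_less_one)
  qed
  have Maxf: "Max (set (beta_partition B)) = f 0"
  proof (rule Max_eqI)
    show "finite (set (beta_partition B))" by simp
  next
    fix y assume "y \<in> set (beta_partition B)"
    then obtain i where i: "i < n" "y = f i" unfolding bp2 by auto
    have "L!(n-1-i) + i \<le> L!(n-1)" using grow[of "n-1-i" i] i by simp
    then show "y \<le> f 0" using i fi[of i] fi[of 0] npos by (simp; linarith)
  next
    show "f 0 \<in> set (beta_partition B)" unfolding bp2 using npos by simp
  qed
  show ?thesis using Maxf MaxB bp2 fi[of 0] npos n by simp
qed

lemma T_fin: "s \<ge> 1 \<Longrightarrow> finite (T s)"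
  by (simp add: T_union)

lemma T_zero: "0 \<notin> T s"
  unfolding T_def by simp

lemma memT: "2*k*k + 5*k + 2 \<in> T (2*k+3)"
proof -
  have e: "2*k*k + 5*k + 2 = k * (2*k+3) + (2*k+2)" by (simp add: algebra_simps)
  have g: "(q*(s::nat)+r) div s = q" "(q*s+r) mod s = r" if "r < s" for q r s
    using that by simp_all
  have "(2*k*k + 5*k + 2) div (2*k+3) = k" "(2*k*k + 5*k + 2) mod (2*k+3) = 2*k+2"
    unfolding e by (rule g; simp)+
  then show ?thesis using T_mem[of "2*k+3"] by simp
qed

lemma MaxT:
  shows "Max (T (2*k+3)) = 2*k*k + 5*k + 2"
proof (rule Max_eqI)
  show "finite (T (2*k+3))" by (rule T_fin) simp
next
  fix h assume "h \<in> T (2*k+3)"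
  then have a: "2 * (h div (2*k+3)) < h mod (2*k+3)" using T_mem[of "2*k+3" h] by simp
  have r: "h mod (2*k+3) < 2*k+3" by simp
  then have q: "h div (2*k+3) \<le> k" using a by linarith
  have "h = h div (2*k+3) * (2*k+3) + h mod (2*k+3)" by (rule div_mult_mod_eq[symmetric])
  also have "\<dots> \<le> k * (2*k+3) + (2*k+2)" using q r by (intro add_mono mult_right_mono) (auto simp del: mod_less_divisor)
  finally show "h \<le> 2*k*k + 5*k + 2" by (simp add: algebra_simps)
next
  have e: "2*k*k + 5*k + 2 = k * (2*k+3) + (2*k+2)" by (simp add: algebra_simps)
  have "(2*k*k + 5*k + 2) div (2*k+3) = k" "(2*k*k + 5*k + 2) mod (2*k+3) = 2*k+2"
  proof -
    have g: "(q*(s::nat)+r) div s = q" "(q*s+r) mod s = r" if "r < s" for q r s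
      using that by simp_all
    show "(2*k*k + 5*k + 2) div (2*k+3) = k" "(2*k*k + 5*k + 2) mod (2*k+3) = 2*k+2"
      unfolding e by (rule g; simp)+
  qed
  then show "2*k*k + 5*k + 2 \<in> T (2*k+3)" using T_mem[of "2*k+3"] by simp
qed


lemma card_T2:
  assumes s: "s \<ge> (1::nat)"
  shows "real (card (T s)) = (real s - 1) * real (s div 2) - real (s div 2) * (real (s div 2) - 1)"
proof -
  have "real (card (T s)) = (\<Sum>q<s div 2. (real s - 1) + (-2) * real q + 0 * (real q)^2)"
    unfolding card_T[OF s] by (rule sum.cong) auto
  also have "\<dots> = (real s - 1) * real (s div 2) - real (s div 2) * (real (s div 2) - 1)"
    unfolding poly_sum by (simp add: field_simps)
  finally show ?thesis .
qed

lemma sum_T2: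
  assumes s: "s \<ge> (1::nat)"
  shows "real (\<Sum>h\<in>T s. h) = (real s - 1) * real s / 2 * real (s div 2)
     + (real s ^ 2 - real s - 1) * real (s div 2) * (real (s div 2) - 1) / 2
     + (- (2 * real s + 2)) * (real (s div 2) - 1) * real (s div 2) * (2 * real (s div 2) - 1) / 6"
proof -
  have "real (\<Sum>h\<in>T s. h) = (\<Sum>q<s div 2. (real s - 1) * real s / 2 + (real s ^ 2 - real s - 1) * real q
          + (- (2 * real s + 2)) * (real q)^2)"
    unfolding sum_T[OF s] by (rule sum.cong) (auto simp: field_simps power2_eq_square)
  also have "\<dots> = (real s - 1) * real s / 2 * real (s div 2)
     + (real s ^ 2 - real s - 1) * real (s div 2) * (real (s div 2) - 1) / 2
     + (- (2 * real s + 2)) * (real (s div 2) - 1) * real (s div 2) * (2 * real (s div 2) - 1) / 6"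
    by (rule poly_sum)
  finally show ?thesis .
qed


theorem mainTheorem9:
  fixes m :: nat
  assumes "m \<ge> 2"
  shows "card (T (2*m - 1)) = m^2 - m
       \<and> real (\<Sum>h\<in>T (2*m - 1). h)
           = 2/3 * real m^4 - real m^3 - 1/6 * real m^2 + 1/2 * real m
       \<and> card (T (2*m)) = m^2
       \<and> real (\<Sum>h\<in>T (2*m). h)
           = 2/3 * real m^4 + 1/3 * real m^3 - 1/6 * real m^2 + 1/6 * real m
       \<and> length (beta_partition (T (2*m - 1))) = m^2 - m
       \<and> Max (set (beta_partition (T (2*m - 1)))) = m^2 - 2*m + 1"
proof -
  obtain k where k: "m = k + 2" using assms by (metis add.commute le_add_diff_inverse)
  define x where "x = real k"
  have s1: "2*m - 1 = 2*k+3" "2*m = 2*k+4" using k by auto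
  have d1: "(2*k+3) div 2 = k+1" "(2*k+4) div 2 = k+2" by simp_all
  have r: "real (2*k+3) = 2*x+3" "real (2*k+4) = 2*x+4" "real (k+1) = x+1" "real (k+2) = x+2"
    "real m = x + 2" unfolding x_def k by simp_all
  have c1r: "real (card (T (2*k+3))) = (2*x+3-1)*(x+1) - (x+1)*(x+1-1)"
    using card_T2[of "2*k+3"] unfolding d1 r by simp
  have "real (m^2 - m) = (x+2)^2 - (x+2)"
    using r(5) by (simp add: of_nat_diff power2_eq_square)
  then have c1r': "real (card (T (2*k+3))) = real (m^2 - m)"
    unfolding c1r by (simp add: power2_eq_square algebra_simps)
  have c1: "card (T (2*k+3)) = m^2 - m" using c1r' of_nat_eq_iff by blast
  have c2r: "real (card (T (2*k+4))) = (2*x+4-1)*(x+2) - (x+2)*(x+2-1)"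
    using card_T2[of "2*k+4"] unfolding d1 r by simp
  have "real (m^2) = (x+2)^2" using r(5) by simp
  then have c2r': "real (card (T (2*k+4))) = real (m^2)"
    unfolding c2r by (simp add: power2_eq_square algebra_simps)
  have c2: "card (T (2*k+4)) = m^2" using c2r' of_nat_eq_iff by blast
  have sum1: "real (\<Sum>h\<in>T (2*k+3). h) = 2/3 * real m^4 - real m^3 - 1/6 * real m^2 + 1/2 * real m"
  proof -
    have "real (\<Sum>h\<in>T (2*k+3). h) = (2*x+3-1)*(2*x+3)/2*(x+1) + ((2*x+3)^2 - (2*x+3) - 1)*(x+1)*(x+1-1)/2 + (-(2*(2*x+3)+2))*(x+1-1)*(x+1)*(2*(x+1)-1)/6"
      using sum_T2[of "2*k+3"] unfolding d1 r by simp
    also have "\<dots> = 2/3*(x+2)^4 - (x+2)^3 - 1/6*(x+2)^2 + 1/2*(x+2)"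
      by (simp add: field_simps power2_eq_square power3_eq_cube power4_eq_xxxx)
    finally show ?thesis unfolding r(5) .
  qed
  have sum2: "real (\<Sum>h\<in>T (2*k+4). h) = 2/3 * real m^4 + 1/3 * real m^3 - 1/6 * real m^2 + 1/6 * real m"
  proof -
    have "real (\<Sum>h\<in>T (2*k+4). h) = (2*x+4-1)*(2*x+4)/2*(x+2) + ((2*x+4)^2 - (2*x+4) - 1)*(x+2)*(x+2-1)/2 + (-(2*(2*x+4)+2))*(x+2-1)*(x+2)*(2*(x+2)-1)/6"
      using sum_T2[of "2*k+4"] unfolding d1 r by simp
    also have "\<dots> = 2/3*(x+2)^4 + 1/3*(x+2)^3 - 1/6*(x+2)^2 + 1/6*(x+2)"
      by (simp add: field_simps power2_eq_square power3_eq_cube power4_eq_xxxx)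
    finally show ?thesis unfolding r(5) .
  qed
  have ne: "T (2*k+3) \<noteq> {}" using memT[of k] by blast
  have bp: "length (beta_partition (T (2*k+3))) = card (T (2*k+3))"
     "Max (set (beta_partition (T (2*k+3)))) = Max (T (2*k+3)) - (card (T (2*k+3)) - 1)"
    using beta_part[OF T_fin T_zero ne] by simp_all
  have mx: "Max (set (beta_partition (T (2*k+3)))) = m^2 - 2*m + 1"
    unfolding bp MaxT c1 k by (simp add: power2_eq_square algebra_simps)
  have t1: "T (2*m - 1) = T (2*k+3)" and t2: "T (2*m) = T (2*k+4)" using s1 by (metis, metis)
  show ?thesis unfolding t1 t2 bp(1) c1 using c1 c2 sum1 sum2 mx by blast
qed

end
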